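(* Let $k$ be a positive-definite kernel on $\mathcal X$, $l$ a positive-definite kernel on $\mathcal Y$, and $h((x,y),(x',y'))=k(x,x')l(y,y')$. Suppose $\sup_{x\in\mathcal X,y\in\mathcal Y}h((x,y),(x,y))\le\nu^2$ for some $\nu>0$. Then for $(X,Y)\sim P_{xy}$, $$\frac1{2\nu^2}\mathrm{HSIC}(X,Y)\le I(X;Y)\qquad\text{and}\qquad-\log\Bigl(1-\frac1{4\nu^2}\mathrm{HSIC}(X,Y)\Bigr)\le I(X;Y).$$
   Context: $I(X;Y)=\mathrm{KL}(P_{xy}\,\|\,P_x\times P_y)$ (natural logarithm) is the Shannon mutual information, $P_x,P_y$ the marginals. $\mathrm{HSIC}_{k,l}(X,Y)=\mathbb E\bigl[k(X,X')l(Y,Y')-2k(X,X')l(Y,Y'')+k(X,X')l(Y'',Y''')\bigr]$, where $(X,Y),(X',Y')\sim P_{xy}$ and $Y'',Y'''\sim P_y$ are all independent; equivalently the squared Hilbert–Schmidt norm of the cross-covariance operator of the feature maps of $k$ and $l$. *)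

theory Defs
  imports "HOL-Probability.Probability"
begin

definition pd_kernel :: "'a set \<Rightarrow> ('a \<Rightarrow> 'a \<Rightarrow> real) \<Rightarrow> bool" where
  "pd_kernel S k \<longleftrightarrow>
     (\<forall>x\<in>S. \<forall>y\<in>S. k x y = k y x) \<and>
     (\<forall>(n::nat) (x::nat \<Rightarrow> 'a) (c::nat \<Rightarrow> real). (\<forall>i<n. x i \<in> S) \<longrightarrow>
        0 \<le> (\<Sum>i<n. \<Sum>j<n. c i * c j * k (x i) (x j)))"

text \<open>KL divergence KL(P || Q) with natural logarithm, valued in the extended reals:
  +infinity unless P is absolutely continuous w.r.t. Q and ln (dP/dQ) is P-integrable
  (its negative part is always P-integrable, so non-integrability means +infinity).\<close>
definition KL_div :: "'a measure \<Rightarrow> 'a measure \<Rightarrow> ereal" where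
  "KL_div P Q =
     (if sets P = sets Q \<and> absolutely_continuous Q P \<and>
         integrable P (\<lambda>z. ln (enn2real (RN_deriv Q P z)))
      then ereal (\<integral>z. ln (enn2real (RN_deriv Q P z)) \<partial>P)
      else \<infinity>)"

definition mutual_info :: "'a measure \<Rightarrow> 'b measure \<Rightarrow> ('a \<times> 'b) measure \<Rightarrow> ereal" where
  "mutual_info MX MY P = KL_div P (distr P MX fst \<Otimes>\<^sub>M distr P MY snd)"

text \<open>HSIC_{k,l}(X,Y) = E[k(X,X')l(Y,Y') - 2 k(X,X')l(Y,Y'') + k(X,X')l(Y'',Y''')]
  with (X,Y),(X',Y') ~ P and Y'',Y''' ~ P_y, all independent.\<close>
definition HSIC :: "'a measure \<Rightarrow> 'b measure \<Rightarrow> ('a \<times> 'b) measure \<Rightarrow>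
    ('a \<Rightarrow> 'a \<Rightarrow> real) \<Rightarrow> ('b \<Rightarrow> 'b \<Rightarrow> real) \<Rightarrow> real" where
  "HSIC MX MY P k l =
     (\<integral>w. (case w of (xy, xy', y2, y3) \<Rightarrow>
              k (fst xy) (fst xy') * l (snd xy) (snd xy')
              - 2 * k (fst xy) (fst xy') * l (snd xy) y2
              + k (fst xy) (fst xy') * l y2 y3)
        \<partial>(P \<Otimes>\<^sub>M P \<Otimes>\<^sub>M distr P MY snd \<Otimes>\<^sub>M distr P MY snd))"

end

theory Submission
  imports Defs
begin

lemma ln_lower: "x > 0 \<Longrightarrow> 1 - 1/x \<le> ln (x::real)"
  using ln_le_minus_one[of "1/x"] by (simp add: ln_div)

lemma g_deriv: "x > 0 \<Longrightarrow> ((\<lambda>x. (x+1) * ln x - 2*(x-1)) has_real_derivative (ln x + (x+1)/x - 2)) (at (x::real))"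
  by (auto intro!: derivative_eq_intros simp: field_simps)

lemma g_deriv_nonneg: "x > 0 \<Longrightarrow> 0 \<le> ln x + (x+1)/x - (2::real)"
proof -
  assume x: "x > 0"
  have "(x+1)/x = 1 + 1/x" using x by (simp add: add_divide_distrib)
  then show ?thesis using ln_lower[OF x] by simp
qed

lemma g_ge: "1 \<le> x \<Longrightarrow> 0 \<le> (x+1) * ln x - 2*(x-1::real)"
proof -
  assume x: "1 \<le> x"
  have "(\<lambda>x. (x+1) * ln x - 2*(x-1::real)) 1 \<le> (\<lambda>x. (x+1) * ln x - 2*(x-1)) x"
  proof (rule DERIV_nonneg_imp_nondecreasing[OF x])
    fix y :: real assume "1 \<le> y" "y \<le> x"
    then have "y > 0" by simp
    then show "\<exists>d. ((\<lambda>x. (x+1) * ln x - 2*(x-1::real)) has_real_derivative d) (at y) \<and> 0 \<le> d"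
      using g_deriv g_deriv_nonneg by blast
  qed
  then show ?thesis by simp
qed

lemma g_le: "0 < x \<Longrightarrow> x \<le> 1 \<Longrightarrow> (x+1) * ln x - 2*(x-1::real) \<le> 0"
proof -
  assume x: "0 < x" "x \<le> 1"
  have "(\<lambda>x. (x+1) * ln x - 2*(x-1::real)) x \<le> (\<lambda>x. (x+1) * ln x - 2*(x-1)) 1"
    proof (rule DERIV_nonneg_imp_nondecreasing[OF x(2)])
    fix y :: real assume "x \<le> y" "y \<le> 1"
    then have "y > 0" using x by simp
    then show "\<exists>d. ((\<lambda>x. (x+1) * ln x - 2*(x-1::real)) has_real_derivative d) (at y) \<and> 0 \<le> d"
      using g_deriv g_deriv_nonneg by blast
  qed
  then show ?thesis by simp
qed

lemma f_deriv: "x > 0 \<Longrightarrow> ((\<lambda>x. (2*x+4) * (x * ln x - x + 1) - 3*(x-1)^2) has_real_derivative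
   (4 * ((x+1) * ln x - 2*(x-1)))) (at (x::real))"
  by (auto intro!: derivative_eq_intros simp: field_simps power2_eq_square)

lemma pinsker_pt:
  fixes x :: real assumes "0 \<le> x"
  shows "3*(x-1)^2 \<le> (2*x+4) * (x * ln x - x + 1)"
proof -
  consider "x = 0" | "0 < x" "x \<le> 1" | "1 \<le> x" using assms by linarith
  then show ?thesis
  proof cases
    case 1 then show ?thesis by simp
  next
    case 2
    have "(\<lambda>x. (2*x+4) * (x * ln x - x + 1) - 3*(x-1)^2) x \<ge> (\<lambda>x. (2*x+4) * (x * ln x - x + 1) - 3*(x-1)^2) 1"
    proof (rule DERIV_nonpos_imp_nonincreasing[of x 1])
      fix y :: real assume "x \<le> y" "y \<le> 1"
      then have "y > 0" "y \<le> 1" using 2 by auto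
      then show "\<exists>d. ((\<lambda>x. (2*x+4) * (x * ln x - x + 1) - 3*(x-1)^2) has_real_derivative d) (at y) \<and> d \<le> 0"
        using f_deriv[of y] g_le[of y] by (intro exI[of _ "4 * ((y+1) * ln y - 2*(y-1))"]) simp
    qed (use 2 in simp)
    then show ?thesis by simp
  next
    case 3
    have "(\<lambda>x. (2*x+4) * (x * ln x - x + 1) - 3*(x-1)^2) 1 \<le> (\<lambda>x. (2*x+4) * (x * ln x - x + 1) - 3*(x-1)^2) x"
    proof (rule DERIV_nonneg_imp_nondecreasing[of 1 x])
      fix y :: real assume "1 \<le> y" "y \<le> x"
      then have "y > 0" "1 \<le> y" by auto
      then show "\<exists>d. ((\<lambda>x. (2*x+4) * (x * ln x - x + 1) - 3*(x-1)^2) has_real_derivative d) (at y) \<and> 0 \<le> d"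
        using f_deriv[of y] g_ge[of y] by (intro exI[of _ "4 * ((y+1) * ln y - 2*(y-1))"]) simp
    qed (use 3 in simp)
    then show ?thesis by simp
  qed
qed

lemma amgm_sup:
  fixes B m M :: real
  assumes "0 \<le> m" "0 \<le> M" "0 \<le> B" and H: "\<And>s. s > 0 \<Longrightarrow> 2*B \<le> s*m + M/s"
  shows "B^2 \<le> m*M"
proof (cases "m > 0 \<and> M > 0")
  case True
  define s where "s = sqrt (M/m)"
  have s: "s > 0" using True by (simp add: s_def)
  have "s*m = sqrt (m*M)" using True
    by (simp add: s_def real_sqrt_divide real_sqrt_mult field_simps)
  moreover have "M/s = sqrt (m*M)" using True
    by (simp add: s_def real_sqrt_divide real_sqrt_mult field_simps)
  ultimately have "B \<le> sqrt (m*M)" using H[OF s] by simp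
  then have "B^2 \<le> (sqrt (m*M))^2" using assms by (intro power_mono) auto
  then show ?thesis using assms by simp
next
  case False
  have "B \<le> 0"
  proof (rule ccontr)
    assume "\<not> B \<le> 0"
    then have Bp: "B > 0" by simp
    show False
    proof (cases "m = 0")
      case True
      have "2*B \<le> M / (M/B + 1)" using H[of "M/B + 1"] True Bp assms by (simp add: field_simps)
      also have "\<dots> < B" using Bp assms by (simp add: field_simps)
      finally show False using Bp by simp
    next
      case False
      then have "M = 0" using \<open>\<not>(m>0 \<and> M>0)\<close> assms by auto
      have "2*B \<le> (B/(m+1))*m" using H[of "B/(m+1)"] \<open>M=0\<close> Bp assms by simp
      also have "\<dots> < B" using Bp assms by (simp add: field_simps)
      finally show False using Bp by simp
    qed
  qed
  then show ?thesis using assms False by auto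
qed

lemma pd_quad:
  assumes "pd_kernel S k" "x \<in> S" "y \<in> S"
  shows "0 \<le> a^2 * k x x + 2*a*b * k x y + b^2 * k y y"
proof -
  let ?p = "\<lambda>i::nat. if i = 0 then x else y"
  let ?c = "\<lambda>i::nat. if i = 0 then a else b"
  have "0 \<le> (\<Sum>i<2. \<Sum>j<2. ?c i * ?c j * k (?p i) (?p j))"
    using assms(1) assms(2,3) unfolding pd_kernel_def by auto
  moreover have "k y x = k x y" using assms unfolding pd_kernel_def by auto
  ultimately show ?thesis by (simp add: numeral_2_eq_2 power2_eq_square algebra_simps)
qed

lemma pd_diag: assumes "pd_kernel S k" "x \<in> S" shows "0 \<le> k x x"
  using pd_quad[OF assms assms(2), of 1 0] by simp

lemma pd_cs:
  assumes "pd_kernel S k" "x \<in> S" "y \<in> S"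
  shows "(k x y)^2 \<le> k x x * k y y"
proof (cases "k y y = 0")
  case False
  have "0 \<le> (k y y)^2 * k x x + 2*(k y y)*(- k x y) * k x y + (k x y)^2 * k y y"
    using pd_quad[OF assms, of "k y y" "- k x y"] by simp
  then have "0 \<le> k y y * (k x x * k y y - (k x y)^2)" by (simp add: power2_eq_square algebra_simps)
  moreover have "k y y > 0" using pd_diag[OF assms(1,3)] False by simp
  ultimately show ?thesis by (simp add: zero_le_mult_iff)
next
  case True
  show ?thesis
  proof (cases "k x y = 0")
    case False
    have "0 \<le> 1 * k x x + 2*1*(-(k x x + 1)/(2 * k x y)) * k x y"
      using pd_quad[OF assms, of 1 "-(k x x + 1)/(2 * k x y)"] True by simp
    then have False using False by (simp add: field_simps)
    then show ?thesis ..
  qed (use True in simp)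
qed

lemma kernel_bound:
  fixes k :: "'a \<Rightarrow> 'a \<Rightarrow> real" and l :: "'b \<Rightarrow> 'b \<Rightarrow> real"
  assumes k: "pd_kernel A k" and l: "pd_kernel B l"
    and bd: "\<forall>x\<in>A. \<forall>y\<in>B. k x x * l y y \<le> \<nu>\<^sup>2"
    and x: "x \<in> A" "x' \<in> A" and y: "y \<in> B" "y' \<in> B"
  shows "\<bar>k x x' * l y y'\<bar> \<le> \<nu>\<^sup>2"
proof -
  have "(k x x' * l y y')^2 = (k x x')^2 * (l y y')^2" by (simp add: power_mult_distrib)
  also have "\<dots> \<le> (k x x * k x' x') * (l y y * l y' y')"
    using pd_cs[OF k x] pd_cs[OF l y] pd_diag[OF k] pd_diag[OF l] x y
    by (intro mult_mono) auto
  also have "\<dots> = (k x x * l y y) * (k x' x' * l y' y')" by simp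
  also have "\<dots> \<le> \<nu>\<^sup>2 * \<nu>\<^sup>2"
    using bd x y pd_diag[OF k] pd_diag[OF l]
    by (intro mult_mono) auto
  also have "\<dots> = (\<nu>\<^sup>2)^2" by (simp add: power2_eq_square)
  finally have "(k x x' * l y y')^2 \<le> (\<nu>\<^sup>2)^2" .
  then show ?thesis using abs_le_square_iff by (metis abs_of_nonneg zero_le_power2)
qed


lemma amgm_pt:
  fixes u a b s :: real
  assumes "0 \<le> a" "0 \<le> b" "0 < s" "0 \<le> u" "u^2 \<le> a*b"
  shows "2*u \<le> s*a + b/s"
proof -
  have "(s*a + b/s)^2 = (s*a - b/s)^2 + 4*(a*b)" using assms(3)
    by (simp add: power2_eq_square field_simps)
  also have "\<dots> \<ge> 4*(a*b)" by simp
  finally have "(2*u)^2 \<le> (s*a + b/s)^2" using assms(5) by (simp add: power_mult_distrib)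
  moreover have "0 \<le> s*a + b/s" using assms by simp
  ultimately show ?thesis by (rule power2_le_imp_le)
qed

lemma phi_nonneg: "0 \<le> (x::real) \<Longrightarrow> 0 \<le> x * ln x - x + 1"
proof -
  assume x: "0 \<le> x"
  have "0 \<le> (2*x+4) * (x * ln x - x + 1)" using pinsker_pt[OF x] by (smt (verit) zero_le_power2)
  moreover have "2*x+4 > 0" using x by simp
  ultimately show ?thesis by (simp add: zero_le_mult_iff)
qed

lemma sqrt_lower:
  fixes x c :: real assumes "0 \<le> x"
  shows "exp (-c) * (x - x * ln x / 2 + c * x) \<le> sqrt x"
proof (cases "x = 0")
  case False
  then have x: "x > 0" using assms by simp
  have e: "exp (ln x - c) = x * exp (-c)" using x by (simp add: exp_diff exp_minus field_simps)
  have "exp (-c) * (x - x * ln x / 2 + c * x) = exp (ln x - c) * (1 + (c - ln x / 2))"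
    unfolding e by (simp add: algebra_simps)
  also have "\<dots> \<le> exp (ln x - c) * exp (c - ln x / 2)"
    by (intro mult_left_mono exp_ge_add_one_self) simp
  also have "\<dots> = exp (ln x / 2)" by (simp flip: exp_add)
  also have "\<dots> = sqrt x" using x by (simp add: powr_half_sqrt[symmetric] powr_def)
  finally show ?thesis .
qed simp

context prob_space
begin

lemma pinsker_BH:
  fixes \<rho> :: "'a \<Rightarrow> real"
  assumes meas[measurable]: "\<rho> \<in> borel_measurable M"
    and nn: "\<And>x. x \<in> space M \<Longrightarrow> 0 \<le> \<rho> x"
    and int: "integrable M \<rho>" and int1: "(\<integral>x. \<rho> x \<partial>M) = 1"
    and intl: "integrable M (\<lambda>x. \<rho> x * ln (\<rho> x))"
  defines "L \<equiv> (\<integral>x. \<bar>\<rho> x - 1\<bar> \<partial>M)" and "K \<equiv> (\<integral>x. \<rho> x * ln (\<rho> x) \<partial>M)"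
  shows "L^2 \<le> 2 * K" and "exp (- K) \<le> 1 - L^2 / 4"
proof -
  have intA: "integrable M (\<lambda>x. \<bar>\<rho> x - 1\<bar>)" using int by auto
  have intphi: "integrable M (\<lambda>x. \<rho> x * ln (\<rho> x) - \<rho> x + 1)" using int intl by auto
  have intphi_eq: "(\<integral>x. \<rho> x * ln (\<rho> x) - \<rho> x + 1 \<partial>M) = K"
    using int intl int1 prob_space by (simp add: K_def)
  have Kpos: "0 \<le> K"
    using intphi_eq phi_nonneg nn integral_nonneg_AE[of "\<lambda>x. \<rho> x * ln (\<rho> x) - \<rho> x + 1" M]
    by (metis (mono_tags, lifting) AE_I2)
  have L0: "0 \<le> L" unfolding L_def by (rule integral_nonneg_AE) auto
  show "L^2 \<le> 2 * K"
  proof -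
    have "L^2 \<le> 2 * K"
    proof (rule amgm_sup)
      fix s :: real assume s: "s > 0"
      have "2 * L = (\<integral>x. 2 * \<bar>\<rho> x - 1\<bar> \<partial>M)" by (simp add: L_def)
      also have "\<dots> \<le> (\<integral>x. s * ((2 * \<rho> x + 4) / 3) + (\<rho> x * ln (\<rho> x) - \<rho> x + 1) / s \<partial>M)"
      proof (rule integral_mono)
        show "integrable M (\<lambda>x. s * ((2 * \<rho> x + 4) / 3) + (\<rho> x * ln (\<rho> x) - \<rho> x + 1) / s)"
          using int intphi by auto
        fix x assume x: "x \<in> space M"
        show "2 * \<bar>\<rho> x - 1\<bar> \<le> s * ((2 * \<rho> x + 4) / 3) + (\<rho> x * ln (\<rho> x) - \<rho> x + 1) / s"
          using pinsker_pt[OF nn[OF x]] nn[OF x] phi_nonneg[OF nn[OF x]] s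
          by (intro amgm_pt) (auto simp: field_simps)
      qed (use intA in auto)
      also have "\<dots> = (\<integral>x. s * ((2 * \<rho> x + 4) / 3) \<partial>M) + (\<integral>x. (\<rho> x * ln (\<rho> x) - \<rho> x + 1) / s \<partial>M)"
        using int intphi by (intro Bochner_Integration.integral_add) auto
      also have "(\<integral>x. (\<rho> x * ln (\<rho> x) - \<rho> x + 1) / s \<partial>M) = K / s"
        using intphi_eq by simp
      also have "(\<integral>x. s * ((2 * \<rho> x + 4) / 3) \<partial>M) = s * ((2 * (\<integral>x. \<rho> x \<partial>M) + 4) / 3)"
        using int prob_space by simp
      also have "s * ((2 * (\<integral>x. \<rho> x \<partial>M) + 4) / 3) = s * 2" using int1 by simp
      finally show "2 * L \<le> s * 2 + K / s" .
    qed (use Kpos L0 in auto)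
    then show ?thesis by simp
  qed
  define B where "B = (\<integral>x. sqrt (\<rho> x) \<partial>M)"
  have intS: "integrable M (\<lambda>x. sqrt (\<rho> x))"
  proof (rule Bochner_Integration.integrable_bound[of _ "\<lambda>x. (1 + \<rho> x) / 2"])
    show "AE x in M. norm (sqrt (\<rho> x)) \<le> norm ((1 + \<rho> x) / 2)"
    proof (rule AE_I2)
      fix x assume x: "x \<in> space M"
      have "2 * sqrt (\<rho> x) \<le> 1 * 1 + \<rho> x / 1"
        using nn[OF x] by (intro amgm_pt) auto
      then show "norm (sqrt (\<rho> x)) \<le> norm ((1 + \<rho> x) / 2)" using nn[OF x] by simp
    qed
  qed (use int in auto)
  have intm: "integrable M (\<lambda>x. min (\<rho> x) 1)" and intM: "integrable M (\<lambda>x. max (\<rho> x) 1)"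
    using int by auto
  have "(\<integral>x. min (\<rho> x) 1 \<partial>M) = (\<integral>x. (\<rho> x + 1 - \<bar>\<rho> x - 1\<bar>) / 2 \<partial>M)"
    by (intro Bochner_Integration.integral_cong) auto
  also have "\<dots> = 1 - L/2" using int intA int1 prob_space by (simp add: L_def)
  finally have im: "(\<integral>x. min (\<rho> x) 1 \<partial>M) = 1 - L/2" .
  have "(\<integral>x. max (\<rho> x) 1 \<partial>M) = (\<integral>x. (\<rho> x + 1 + \<bar>\<rho> x - 1\<bar>) / 2 \<partial>M)"
    by (intro Bochner_Integration.integral_cong) auto
  also have "\<dots> = 1 + L/2" using int intA int1 prob_space by (simp add: L_def)
  finally have iM: "(\<integral>x. max (\<rho> x) 1 \<partial>M) = 1 + L/2" .
  have m0: "0 \<le> 1 - L/2" unfolding im[symmetric] using nn by (intro integral_nonneg_AE) auto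
  have B0: "0 \<le> B" unfolding B_def using nn by (intro integral_nonneg_AE) auto
  have Bup: "B^2 \<le> (1 - L/2) * (1 + L/2)"
  proof (rule amgm_sup)
    fix s :: real assume s: "s > 0"
    have "2 * B = (\<integral>x. 2 * sqrt (\<rho> x) \<partial>M)" by (simp add: B_def)
    also have "\<dots> \<le> (\<integral>x. s * min (\<rho> x) 1 + max (\<rho> x) 1 / s \<partial>M)"
    proof (rule integral_mono)
      show "integrable M (\<lambda>x. s * min (\<rho> x) 1 + max (\<rho> x) 1 / s)" using intm intM by auto
      fix x assume x: "x \<in> space M"
      have "min (\<rho> x) 1 * max (\<rho> x) 1 = \<rho> x" by (simp add: min_def max_def)
      then show "2 * sqrt (\<rho> x) \<le> s * min (\<rho> x) 1 + max (\<rho> x) 1 / s"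
        using nn[OF x] s by (intro amgm_pt) auto
    qed (use intS in auto)
    also have "\<dots> = s * (1 - L/2) + (1 + L/2) / s"
      using intm intM im iM by simp
    finally show "2 * B \<le> s * (1 - L/2) + (1 + L/2) / s" .
  qed (use m0 L0 B0 in auto)
  have "exp (- (K/2)) * (1 - K/2 + K/2) \<le> B"
  proof -
    have "exp (- (K/2)) * (1 - K/2 + K/2) = (\<integral>x. exp (- (K/2)) * (\<rho> x - \<rho> x * ln (\<rho> x) / 2 + (K/2) * \<rho> x) \<partial>M)"
      using int intl int1 by (simp add: K_def)
    also have "\<dots> \<le> B" unfolding B_def
    proof (intro integral_mono)
      fix x assume x: "x \<in> space M"
      show "exp (- (K/2)) * (\<rho> x - \<rho> x * ln (\<rho> x) / 2 + (K/2) * \<rho> x) \<le> sqrt (\<rho> x)"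
        by (rule sqrt_lower[OF nn[OF x]])
    qed (use int intl intS in auto)
    finally show ?thesis .
  qed
  then have "exp (- (K/2)) \<le> B" by simp
  then have "(exp (- (K/2)))^2 \<le> B^2" by (intro power_mono) auto
  also have "(exp (- (K/2)))^2 = exp (- K)" by (simp flip: exp_add add: power2_eq_square)
  finally show "exp (- K) \<le> 1 - L^2 / 4" using Bup by (simp add: power2_eq_square algebra_simps)
qed

end

lemma int_pair:
  fixes f :: "'a \<times> 'b \<Rightarrow> real"
  assumes A: "prob_space A" and B: "prob_space B"
    and f[measurable]: "f \<in> borel_measurable (A \<Otimes>\<^sub>M B)"
    and bd: "\<And>a b. a \<in> space A \<Longrightarrow> b \<in> space B \<Longrightarrow> \<bar>f (a, b)\<bar> \<le> C"
  shows "integrable (A \<Otimes>\<^sub>M B) f" "integral\<^sup>L (A \<Otimes>\<^sub>M B) f = (\<integral>a. (\<integral>b. f (a, b) \<partial>B) \<partial>A)"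
proof -
  interpret pair_prob_space A B using A B by (simp add: pair_prob_space_def pair_sigma_finite_def prob_space_imp_sigma_finite)
  show int: "integrable (A \<Otimes>\<^sub>M B) f"
    by (rule P.integrable_const_bound[where B=C]) (use bd in \<open>auto simp: space_pair_measure\<close>)
  show "integral\<^sup>L (A \<Otimes>\<^sub>M B) f = (\<integral>a. (\<integral>b. f (a, b) \<partial>B) \<partial>A)"
    by (rule integral_fst'[OF int, symmetric])
qed

lemma abs_int_le:
  fixes f :: "'a \<Rightarrow> real"
  assumes "prob_space M" and [measurable]: "f \<in> borel_measurable M"
    and b: "\<And>x. x \<in> space M \<Longrightarrow> \<bar>f x\<bar> \<le> C"
  shows "\<bar>integral\<^sup>L M f\<bar> \<le> C"
proof -
  interpret prob_space M by fact
  have i1: "\<bar>integral\<^sup>L M f\<bar> \<le> (\<integral>x. \<bar>f x\<bar> \<partial>M)" by (rule integral_abs_bound)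
  obtain x0 where "x0 \<in> space M" using not_empty by auto
  then have C0: "0 \<le> C" using b[of x0] by simp
  have "(\<integral>x. \<bar>f x\<bar> \<partial>M) \<le> (\<integral>x. C \<partial>M)"
    using b C0 by (intro integral_mono integrable_const_bound[where B=C]) auto
  moreover have "(\<integral>x. C \<partial>M) = C" using prob_space by simp
  ultimately show ?thesis using i1 by linarith
qed

lemma int_pair_fst:
  fixes f :: "'a \<Rightarrow> real"
  assumes A: "prob_space A" and B: "prob_space B"
    and f[measurable]: "f \<in> borel_measurable A"
    and bd: "\<And>a. a \<in> space A \<Longrightarrow> \<bar>f a\<bar> \<le> C"
  shows "(\<integral>p. f (fst p) \<partial>(A \<Otimes>\<^sub>M B)) = integral\<^sup>L A f"
proof -
  have "(\<integral>p. f (fst p) \<partial>(A \<Otimes>\<^sub>M B)) = (\<integral>a. (\<integral>b. f a \<partial>B) \<partial>A)"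
    using int_pair(2)[OF A B, of "\<lambda>p. f (fst p)" C] bd by auto
  also have "\<dots> = integral\<^sup>L A f" using prob_space.prob_space[OF B] by simp
  finally show ?thesis .
qed

lemma absmul_le: "\<bar>a\<bar> \<le> c \<Longrightarrow> 0 \<le> r \<Longrightarrow> \<bar>r * a\<bar> \<le> c * (r::real)"
  by (simp add: abs_mult) (metis mult.commute mult_left_mono)

locale hsic_setting =
  fixes MX :: "'a measure" and MY :: "'b measure" and P :: "('a \<times> 'b) measure"
    and k :: "'a \<Rightarrow> 'a \<Rightarrow> real" and l :: "'b \<Rightarrow> 'b \<Rightarrow> real" and \<nu> :: real
  assumes prob: "prob_space P"
    and sP[measurable_cong]: "sets P = sets (MX \<Otimes>\<^sub>M MY)"
    and kpd: "pd_kernel (space MX) k" and lpd: "pd_kernel (space MY) l"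
    and km[measurable]: "(\<lambda>(x, x'). k x x') \<in> borel_measurable (MX \<Otimes>\<^sub>M MX)"
    and lm[measurable]: "(\<lambda>(y, y'). l y y') \<in> borel_measurable (MY \<Otimes>\<^sub>M MY)"
    and nu: "\<nu> > 0"
    and bd: "\<forall>x\<in>space MX. \<forall>y\<in>space MY. k x x * l y y \<le> \<nu>\<^sup>2"
begin

definition "Px = distr P MX fst"
definition "Py = distr P MY snd"
definition "Q = Px \<Otimes>\<^sub>M Py"
definition "h z w = k (fst z) (fst w) * l (snd z) (snd w)"

lemma sPx[measurable_cong]: "sets Px = sets MX" by (simp add: Px_def)
lemma sPy[measurable_cong]: "sets Py = sets MY" by (simp add: Py_def)
lemma sQ[measurable_cong]: "sets Q = sets (MX \<Otimes>\<^sub>M MY)"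
  unfolding Q_def by (intro sets_pair_measure_cong sPx sPy)
lemma spP: "space P = space MX \<times> space MY"
  using sets_eq_imp_space_eq[OF sP] by (simp add: space_pair_measure)
lemma spQ: "space Q = space MX \<times> space MY"
  using sets_eq_imp_space_eq[OF sQ] by (simp add: space_pair_measure)
lemma spPy: "space Py = space MY" by (simp add: Py_def)

lemma fst_meas[measurable]: "fst \<in> measurable P MX" by measurable
lemma snd_meas[measurable]: "snd \<in> measurable P MY" by measurable

lemma probPx: "prob_space Px" unfolding Px_def by (intro prob_space.prob_space_distr prob) measurable
lemma probPy: "prob_space Py" unfolding Py_def by (intro prob_space.prob_space_distr prob) measurable
lemma probQ: "prob_space Q" unfolding Q_def
  using probPx probPy by (simp add: pair_prob_space_def pair_sigma_finite_def prob_space_imp_sigma_finite prob_space_pair)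

lemma h_meas[measurable]: "(\<lambda>(z, w). h z w) \<in> borel_measurable ((MX \<Otimes>\<^sub>M MY) \<Otimes>\<^sub>M (MX \<Otimes>\<^sub>M MY))"
  unfolding h_def by measurable

lemma h_bound: "z \<in> space MX \<times> space MY \<Longrightarrow> w \<in> space MX \<times> space MY \<Longrightarrow> \<bar>h z w\<bar> \<le> \<nu>\<^sup>2"
  unfolding h_def using kernel_bound[OF kpd lpd bd] by (auto simp: mem_Times_iff)

lemma h_sym: "z \<in> space MX \<times> space MY \<Longrightarrow> w \<in> space MX \<times> space MY \<Longrightarrow> h z w = h w z"
  unfolding h_def using kpd lpd by (auto simp: pd_kernel_def mem_Times_iff)

lemma transfer:
  fixes g :: "'a \<times> 'b \<Rightarrow> real"
  assumes g[measurable]: "g \<in> borel_measurable (MX \<Otimes>\<^sub>M MY)"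
    and gb: "\<And>z. z \<in> space MX \<times> space MY \<Longrightarrow> \<bar>g z\<bar> \<le> C"
  shows "(\<integral>b. (\<integral>y. g (fst b, y) \<partial>Py) \<partial>P) = integral\<^sup>L Q g"
proof -
  have "(\<integral>b. (\<integral>y. g (fst b, y) \<partial>Py) \<partial>P) = (\<integral>p. g (fst (fst p), snd p) \<partial>(P \<Otimes>\<^sub>M Py))"
    using int_pair(2)[OF prob probPy, of "\<lambda>p. g (fst (fst p), snd p)" C] gb by (auto simp: spP spPy)
  also have "\<dots> = integral\<^sup>L (distr (P \<Otimes>\<^sub>M Py) (MX \<Otimes>\<^sub>M MY) (\<lambda>(x, y). (fst x, (\<lambda>y. y) y))) g"
    by (subst integral_distr) (auto simp: case_prod_beta)
  also have "distr (P \<Otimes>\<^sub>M Py) (MX \<Otimes>\<^sub>M MY) (\<lambda>(x, y). (fst x, (\<lambda>y. y) y)) = distr P MX fst \<Otimes>\<^sub>M distr Py MY (\<lambda>y. y)"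
    by (rule pair_measure_distr[symmetric]) (use probPy in \<open>auto simp: distr_id2 sPy prob_space_imp_sigma_finite\<close>)
  also have "distr Py MY (\<lambda>y. y) = Py" by (simp add: distr_id2 sPy)
  finally show ?thesis by (simp add: Q_def Px_def)
qed


lemma probS: "prob_space (P \<Otimes>\<^sub>M P \<Otimes>\<^sub>M Py \<Otimes>\<^sub>M Py)"
  using prob probPy by (simp add: pair_prob_space_def pair_sigma_finite_def prob_space_imp_sigma_finite prob_space_pair)
lemma probR: "prob_space (P \<Otimes>\<^sub>M Py \<Otimes>\<^sub>M Py)"
  using prob probPy by (simp add: pair_prob_space_def pair_sigma_finite_def prob_space_imp_sigma_finite prob_space_pair)
lemma probYY: "prob_space (Py \<Otimes>\<^sub>M Py)"
  using prob probPy by (simp add: pair_prob_space_def pair_sigma_finite_def prob_space_imp_sigma_finite prob_space_pair)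

lemma hint_meas[measurable]: "(\<lambda>z. \<integral>w. h z w \<partial>Q) \<in> borel_measurable (MX \<Otimes>\<^sub>M MY)"
  using probQ by (simp add: prob_space_imp_sigma_finite sigma_finite_measure.borel_measurable_lebesgue_integral)

lemma hint_bound: "z \<in> space MX \<times> space MY \<Longrightarrow> \<bar>\<integral>w. h z w \<partial>Q\<bar> \<le> \<nu>\<^sup>2"
  by (rule abs_int_le[OF probQ]) (auto simp: spQ h_bound)

lemma hsic_decomp:
  "HSIC MX MY P k l = (\<integral>a. (\<integral>b. h a b \<partial>P) \<partial>P) - 2 * (\<integral>a. (\<integral>w. h a w \<partial>Q) \<partial>P)
      + (\<integral>z. (\<integral>w. h z w \<partial>Q) \<partial>Q)"
proof -
  let ?S = "P \<Otimes>\<^sub>M P \<Otimes>\<^sub>M Py \<Otimes>\<^sub>M Py"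
  let ?R = "P \<Otimes>\<^sub>M Py \<Otimes>\<^sub>M Py"
  interpret S: prob_space ?S by (rule probS)
  have spS: "space ?S = (space MX \<times> space MY) \<times> (space MX \<times> space MY) \<times> space MY \<times> space MY"
    by (simp add: space_pair_measure spP spPy)
  define F1 where "F1 = (\<lambda>w::('a\<times>'b)\<times>('a\<times>'b)\<times>'b\<times>'b. h (fst w) (fst (snd w)))"
  define F2 where "F2 = (\<lambda>w::('a\<times>'b)\<times>('a\<times>'b)\<times>'b\<times>'b. h (fst w) (fst (fst (snd w)), fst (snd (snd w))))"
  define F3 where "F3 = (\<lambda>w::('a\<times>'b)\<times>('a\<times>'b)\<times>'b\<times>'b. h (fst (fst w), fst (snd (snd w))) (fst (fst (snd w)), snd (snd (snd w))))"
  have [measurable]: "F1 \<in> borel_measurable ?S" "F2 \<in> borel_measurable ?S" "F3 \<in> borel_measurable ?S"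
    unfolding F1_def F2_def F3_def by measurable
  have iF: "integrable ?S F1" "integrable ?S F2" "integrable ?S F3"
    by (auto intro!: S.integrable_const_bound[where B="\<nu>\<^sup>2"] AE_I2 h_bound simp: spS F1_def F2_def F3_def space_pair_measure spP spPy)
  have "HSIC MX MY P k l = (\<integral>w. F1 w - 2 * F2 w + F3 w \<partial>?S)"
    unfolding HSIC_def Py_def[symmetric]
    by (intro Bochner_Integration.integral_cong) (auto simp: F1_def F2_def F3_def h_def split: prod.splits)
  also have "\<dots> = integral\<^sup>L ?S F1 - 2 * integral\<^sup>L ?S F2 + integral\<^sup>L ?S F3"
    using iF by simp
  also have "integral\<^sup>L ?S F1 = (\<integral>a. (\<integral>b. h a b \<partial>P) \<partial>P)"
  proof -
    have "integral\<^sup>L ?S F1 = (\<integral>a. (\<integral>r. h a (fst r) \<partial>?R) \<partial>P)"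
      using int_pair(2)[OF prob probR, of F1 "\<nu>\<^sup>2"] h_bound
      by (auto simp: F1_def spP space_pair_measure spPy)
    also have "\<dots> = (\<integral>a. (\<integral>b. h a b \<partial>P) \<partial>P)"
    proof (intro Bochner_Integration.integral_cong refl)
      fix a assume a: "a \<in> space P"
      show "(\<integral>r. h a (fst r) \<partial>?R) = (\<integral>b. h a b \<partial>P)"
        by (rule int_pair_fst[OF prob probYY, where C="\<nu>\<^sup>2"]) (use a h_bound in \<open>auto simp: spP\<close>)
    qed
    finally show ?thesis .
  qed
  also have "integral\<^sup>L ?S F2 = (\<integral>a. (\<integral>w. h a w \<partial>Q) \<partial>P)"
  proof -
    have "integral\<^sup>L ?S F2 = (\<integral>a. (\<integral>r. h a (fst (fst r), fst (snd r)) \<partial>?R) \<partial>P)"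
      using int_pair(2)[OF prob probR, of F2 "\<nu>\<^sup>2"] h_bound
      by (auto simp: F2_def spP space_pair_measure spPy case_prod_beta)
    also have "\<dots> = (\<integral>a. (\<integral>w. h a w \<partial>Q) \<partial>P)"
    proof (intro Bochner_Integration.integral_cong refl)
      fix a assume a: "a \<in> space P"
      have "(\<integral>r. h a (fst (fst r), fst (snd r)) \<partial>?R) = (\<integral>b. (\<integral>q. h a (fst b, fst q) \<partial>(Py \<Otimes>\<^sub>M Py)) \<partial>P)"
        using int_pair(2)[OF prob probYY, of "\<lambda>r. h a (fst (fst r), fst (snd r))" "\<nu>\<^sup>2"] h_bound a
        by (auto simp: spP space_pair_measure spPy)
      also have "\<dots> = (\<integral>b. (\<integral>c. h a (fst b, c) \<partial>Py) \<partial>P)"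
      proof (intro Bochner_Integration.integral_cong refl)
        fix b assume b: "b \<in> space P"
        show "(\<integral>q. h a (fst b, fst q) \<partial>(Py \<Otimes>\<^sub>M Py)) = (\<integral>c. h a (fst b, c) \<partial>Py)"
          by (rule int_pair_fst[OF probPy probPy, where C="\<nu>\<^sup>2"]) (use a b h_bound in \<open>auto simp: spP spPy\<close>)
      qed
      also have "\<dots> = (\<integral>w. h a w \<partial>Q)"
        by (rule transfer[where C="\<nu>\<^sup>2" and g="h a"]) (use a h_bound in \<open>auto simp: spP\<close>)
      finally show "(\<integral>r. h a (fst (fst r), fst (snd r)) \<partial>?R) = (\<integral>w. h a w \<partial>Q)" .
    qed
    finally show ?thesis .
  qed
  also have "integral\<^sup>L ?S F3 = (\<integral>z. (\<integral>w. h z w \<partial>Q) \<partial>Q)"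
  proof -
    have "integral\<^sup>L ?S F3 = (\<integral>a. (\<integral>r. h (fst a, fst (snd r)) (fst (fst r), snd (snd r)) \<partial>?R) \<partial>P)"
      using int_pair(2)[OF prob probR, of F3 "\<nu>\<^sup>2"] h_bound
      by (auto simp: F3_def spP space_pair_measure spPy case_prod_beta)
    also have "\<dots> = (\<integral>a. (\<integral>c. (\<integral>w. h (fst a, c) w \<partial>Q) \<partial>Py) \<partial>P)"
    proof (intro Bochner_Integration.integral_cong refl)
      fix a assume a: "a \<in> space P"
      have "(\<integral>r. h (fst a, fst (snd r)) (fst (fst r), snd (snd r)) \<partial>?R)
           = (\<integral>b. (\<integral>q. h (fst a, fst q) (fst b, snd q) \<partial>(Py \<Otimes>\<^sub>M Py)) \<partial>P)"
        using int_pair(2)[OF prob probYY, of "\<lambda>r. h (fst a, fst (snd r)) (fst (fst r), snd (snd r))" "\<nu>\<^sup>2"] h_bound a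
        by (auto simp: spP space_pair_measure spPy)
      also have "\<dots> = (\<integral>b. (\<integral>c. (\<integral>d. h (fst a, c) (fst b, d) \<partial>Py) \<partial>Py) \<partial>P)"
      proof (intro Bochner_Integration.integral_cong refl)
        fix b assume b: "b \<in> space P"
        show "(\<integral>q. h (fst a, fst q) (fst b, snd q) \<partial>(Py \<Otimes>\<^sub>M Py)) = (\<integral>c. (\<integral>d. h (fst a, c) (fst b, d) \<partial>Py) \<partial>Py)"
          using int_pair(2)[OF probPy probPy, of "\<lambda>q. h (fst a, fst q) (fst b, snd q)" "\<nu>\<^sup>2"] h_bound a b
          by (auto simp: spP spPy)
      qed
      also have "\<dots> = (\<integral>c. (\<integral>b. (\<integral>d. h (fst a, c) (fst b, d) \<partial>Py) \<partial>P) \<partial>Py)"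
      proof -
        interpret PP: pair_prob_space P Py
          using prob probPy by (simp add: pair_prob_space_def pair_sigma_finite_def prob_space_imp_sigma_finite)
        have "integrable (P \<Otimes>\<^sub>M Py) (\<lambda>(b, c). (\<integral>d. h (fst a, c) (fst b, d) \<partial>Py))"
          using int_pair(1)[OF prob probPy, of "\<lambda>(b, c). (\<integral>d. h (fst a, c) (fst b, d) \<partial>Py)" "\<nu>\<^sup>2"]
            abs_int_le[OF probPy] h_bound a
          by (auto simp: spP spPy)
        from PP.Fubini_integral[OF this] show ?thesis by simp
      qed
      also have "\<dots> = (\<integral>c. (\<integral>w. h (fst a, c) w \<partial>Q) \<partial>Py)"
      proof (rule Bochner_Integration.integral_cong[OF refl])
        fix c assume c: "c \<in> space Py"
        show "(\<integral>b. (\<integral>d. h (fst a, c) (fst b, d) \<partial>Py) \<partial>P) = (\<integral>w. h (fst a, c) w \<partial>Q)"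
          by (rule transfer[where C="\<nu>\<^sup>2" and g="h (fst a, c)"]) (use a c h_bound in \<open>auto simp: spP spPy\<close>)
      qed
      finally show "(\<integral>r. h (fst a, fst (snd r)) (fst (fst r), snd (snd r)) \<partial>?R) = (\<integral>c. (\<integral>w. h (fst a, c) w \<partial>Q) \<partial>Py)" .
    qed
    also have "\<dots> = (\<integral>z. (\<integral>w. h z w \<partial>Q) \<partial>Q)"
      by (rule transfer[where C="\<nu>\<^sup>2" and g="\<lambda>z. \<integral>w. h z w \<partial>Q"]) (use hint_bound in auto)
    finally show ?thesis .
  qed
  finally show ?thesis .
qed


definition "\<rho> z = enn2real (RN_deriv Q P z)"

lemma rho_meas[measurable]: "\<rho> \<in> borel_measurable Q"
  unfolding \<rho>_def by measurable
lemma rho_meas'[measurable]: "\<rho> \<in> borel_measurable (MX \<Otimes>\<^sub>M MY)"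
  using rho_meas measurable_cong_sets[OF sQ refl] by blast
lemma rho_nn: "0 \<le> \<rho> z" unfolding \<rho>_def by simp

lemma meas_Q: "f \<in> borel_measurable (MX \<Otimes>\<^sub>M MY) \<Longrightarrow> f \<in> borel_measurable Q"
  using measurable_cong_sets[OF sQ refl] by blast

lemma sPQ: "sets P = sets Q" using sP sQ by simp

lemma RN_int:
  assumes ac: "absolutely_continuous Q P" and f[measurable]: "f \<in> borel_measurable (MX \<Otimes>\<^sub>M MY)"
  shows "integral\<^sup>L P f = (\<integral>z. \<rho> z * f z \<partial>Q)"
    and "integrable P f \<longleftrightarrow> integrable Q (\<lambda>z. \<rho> z * f z)"
proof -
  interpret Q: prob_space Q by (rule probQ)
  interpret P: prob_space P by (rule prob)
  have sf: "sigma_finite_measure P" by (rule P.sigma_finite_measure_axioms)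
  have fQ: "f \<in> borel_measurable Q" using f measurable_cong_sets[OF sQ refl] by blast
  show "integral\<^sup>L P f = (\<integral>z. \<rho> z * f z \<partial>Q)"
    unfolding \<rho>_def by (rule Q.RN_deriv_integral[OF sf ac sPQ fQ])
  show "integrable P f \<longleftrightarrow> integrable Q (\<lambda>z. \<rho> z * f z)"
    unfolding \<rho>_def by (rule Q.RN_deriv_integrable[OF sf ac sPQ fQ])
qed

lemma rho_int:
  assumes ac: "absolutely_continuous Q P"
  shows "integrable Q \<rho>" "(\<integral>z. \<rho> z \<partial>Q) = 1"
proof -
  interpret P: prob_space P by (rule prob)
  have "integrable P (\<lambda>_. 1::real)" by simp
  then show "integrable Q \<rho>" using RN_int(2)[OF ac, of "\<lambda>_. 1"] by simp
  show "(\<integral>z. \<rho> z \<partial>Q) = 1" using RN_int(1)[OF ac, of "\<lambda>_. 1"] P.prob_space by simp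
qed

lemma rho_h_int:
  assumes ac: "absolutely_continuous Q P" and z: "z \<in> space MX \<times> space MY"
  shows "integrable Q (\<lambda>w. \<rho> w * h z w)"
proof (rule Bochner_Integration.integrable_bound[of Q "\<lambda>w. \<nu>\<^sup>2 * \<rho> w"])
  show "integrable Q (\<lambda>w. \<nu>\<^sup>2 * \<rho> w)" using rho_int[OF ac] by simp
  show "AE w in Q. norm (\<rho> w * h z w) \<le> norm (\<nu>\<^sup>2 * \<rho> w)"
  proof (rule AE_I2)
    fix w assume "w \<in> space Q"
    then have hb: "\<bar>h z w\<bar> \<le> \<nu>\<^sup>2" using h_bound z spQ by auto
    show "norm (\<rho> w * h z w) \<le> norm (\<nu>\<^sup>2 * \<rho> w)"
      using absmul_le[OF hb rho_nn[of w]] rho_nn[of w] by (simp add: abs_mult)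
  qed
  show "(\<lambda>w. \<rho> w * h z w) \<in> borel_measurable Q"
    apply (rule meas_Q) apply measurable using z by (auto simp: space_pair_measure intro: measurable_ident)
qed

lemma h_int: "z \<in> space MX \<times> space MY \<Longrightarrow> integrable Q (\<lambda>w. h z w)"
proof -
  assume z: "z \<in> space MX \<times> space MY"
  interpret Q: prob_space Q by (rule probQ)
  show ?thesis
    by (rule Q.integrable_const_bound[where B="\<nu>\<^sup>2"]) (use h_bound spQ z in \<open>auto intro!: meas_Q AE_I2\<close>)
qed

lemma hsic_le:
  assumes ac: "absolutely_continuous Q P"
  shows "HSIC MX MY P k l \<le> \<nu>\<^sup>2 * (\<integral>z. \<bar>\<rho> z - 1\<bar> \<partial>Q)^2"
proof -
  interpret Q: prob_space Q by (rule probQ)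
  define L where "L = (\<integral>z. \<bar>\<rho> z - 1\<bar> \<partial>Q)"
  define \<phi>1 where "\<phi>1 z = (\<integral>w. \<rho> w * h z w \<partial>Q)" for z
  define \<phi>3 where "\<phi>3 z = (\<integral>w. h z w \<partial>Q)" for z
  have m1[measurable]: "\<phi>1 \<in> borel_measurable (MX \<Otimes>\<^sub>M MY)" unfolding \<phi>1_def
    using Q.borel_measurable_lebesgue_integral by measurable
  have m3[measurable]: "\<phi>3 \<in> borel_measurable (MX \<Otimes>\<^sub>M MY)" unfolding \<phi>3_def by measurable
  have ir: "integrable Q \<rho>" and ir1: "(\<integral>z. \<rho> z \<partial>Q) = 1" using rho_int[OF ac] by auto
  have b1: "\<bar>\<phi>1 z\<bar> \<le> \<nu>\<^sup>2" if z: "z \<in> space MX \<times> space MY" for z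
  proof -
    have "\<bar>\<phi>1 z\<bar> \<le> (\<integral>w. \<bar>\<rho> w * h z w\<bar> \<partial>Q)" unfolding \<phi>1_def by (rule integral_abs_bound)
    also have "\<dots> \<le> (\<integral>w. \<nu>\<^sup>2 * \<rho> w \<partial>Q)"
    proof (rule integral_mono)
      fix w assume "w \<in> space Q"
      then have hb: "\<bar>h z w\<bar> \<le> \<nu>\<^sup>2" using h_bound z spQ by auto
      show "\<bar>\<rho> w * h z w\<bar> \<le> \<nu>\<^sup>2 * \<rho> w"
        using absmul_le[OF hb rho_nn[of w]] rho_nn[of w] by (simp add: abs_mult)
    qed (use rho_h_int[OF ac z] ir in auto)
    also have "\<dots> = \<nu>\<^sup>2" using ir1 by simp
    finally show ?thesis .
  qed
  have b3: "\<bar>\<phi>3 z\<bar> \<le> \<nu>\<^sup>2" if z: "z \<in> space MX \<times> space MY" for z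
    unfolding \<phi>3_def by (rule hint_bound[OF z])
  have i1: "integrable Q \<phi>1" and i3: "integrable Q \<phi>3"
    using b1 b3 spQ by (auto intro!: Q.integrable_const_bound[where B="\<nu>\<^sup>2"] AE_I2)
  have bnd_rho: "integrable Q (\<lambda>z. \<rho> z * f z)"
    if [measurable]: "f \<in> borel_measurable (MX \<Otimes>\<^sub>M MY)" and fb: "\<And>z. z \<in> space MX \<times> space MY \<Longrightarrow> \<bar>f z\<bar> \<le> \<nu>\<^sup>2" for f
  proof (rule Bochner_Integration.integrable_bound[of Q "\<lambda>w. \<nu>\<^sup>2 * \<rho> w"])
    show "integrable Q (\<lambda>w. \<nu>\<^sup>2 * \<rho> w)" using ir by simp
    show "AE w in Q. norm (\<rho> w * f w) \<le> norm (\<nu>\<^sup>2 * \<rho> w)"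
    proof (rule AE_I2)
      fix w assume "w \<in> space Q"
      then have hb: "\<bar>f w\<bar> \<le> \<nu>\<^sup>2" using fb spQ by auto
      show "norm (\<rho> w * f w) \<le> norm (\<nu>\<^sup>2 * \<rho> w)"
        using absmul_le[OF hb rho_nn[of w]] rho_nn[of w] by (simp add: abs_mult)
    qed
    show "(\<lambda>w. \<rho> w * f w) \<in> borel_measurable Q" by (rule meas_Q) measurable
  qed
  have ir1': "integrable Q (\<lambda>z. \<rho> z * \<phi>1 z)" by (rule bnd_rho) (use b1 in auto)
  have ir3': "integrable Q (\<lambda>z. \<rho> z * \<phi>3 z)" by (rule bnd_rho) (use b3 in auto)
  have T1: "(\<integral>a. (\<integral>b. h a b \<partial>P) \<partial>P) = (\<integral>z. \<rho> z * \<phi>1 z \<partial>Q)"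
  proof -
    have "(\<integral>a. (\<integral>b. h a b \<partial>P) \<partial>P) = (\<integral>a. \<phi>1 a \<partial>P)"
    proof (rule Bochner_Integration.integral_cong[OF refl])
      fix a assume a: "a \<in> space P"
      have [measurable]: "h a \<in> borel_measurable (MX \<Otimes>\<^sub>M MY)"
        apply measurable using a spP by (auto simp: space_pair_measure intro: measurable_ident)
      show "(\<integral>b. h a b \<partial>P) = \<phi>1 a" unfolding \<phi>1_def by (rule RN_int(1)[OF ac]) measurable
    qed
    also have "\<dots> = (\<integral>z. \<rho> z * \<phi>1 z \<partial>Q)" by (rule RN_int(1)[OF ac m1])
    finally show ?thesis .
  qed
  have T2: "(\<integral>a. (\<integral>w. h a w \<partial>Q) \<partial>P) = (\<integral>z. \<rho> z * \<phi>3 z \<partial>Q)"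
  proof -
    have "(\<integral>a. (\<integral>w. h a w \<partial>Q) \<partial>P) = integral\<^sup>L P \<phi>3"
      by (rule arg_cong[where f="integral\<^sup>L P"]) (simp add: \<phi>3_def fun_eq_iff)
    then show ?thesis using RN_int(1)[OF ac m3] by simp
  qed
  have T3: "(\<integral>z. (\<integral>w. h z w \<partial>Q) \<partial>Q) = (\<integral>z. \<phi>3 z \<partial>Q)" by (simp add: \<phi>3_def)
  have swap: "(\<integral>z. \<phi>1 z \<partial>Q) = (\<integral>z. \<rho> z * \<phi>3 z \<partial>Q)"
  proof -
    interpret QQ: pair_prob_space Q Q by (simp add: pair_prob_space_def pair_sigma_finite_def Q.prob_space_axioms Q.sigma_finite_measure_axioms)
    have int2: "integrable (Q \<Otimes>\<^sub>M Q) (\<lambda>(z, w). \<rho> w * h z w)"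
    proof (rule QQ.Fubini_integrable)
      show "integrable Q (\<lambda>z. \<integral>w. norm (case (z, w) of (z, w) \<Rightarrow> \<rho> w * h z w) \<partial>Q)"
      proof (rule Q.integrable_const_bound[where B="\<nu>\<^sup>2"])
        show "AE z in Q. norm (\<integral>w. norm (case (z, w) of (z, w) \<Rightarrow> \<rho> w * h z w) \<partial>Q) \<le> \<nu>\<^sup>2"
        proof (rule AE_I2)
          fix z assume z: "z \<in> space Q"
          have "(\<integral>w. norm (\<rho> w * h z w) \<partial>Q) \<le> (\<integral>w. \<nu>\<^sup>2 * \<rho> w \<partial>Q)"
          proof (rule integral_mono)
            fix w assume "w \<in> space Q"
            then have hb: "\<bar>h z w\<bar> \<le> \<nu>\<^sup>2" using h_bound z spQ by auto
            show "norm (\<rho> w * h z w) \<le> \<nu>\<^sup>2 * \<rho> w"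
              using absmul_le[OF hb rho_nn[of w]] rho_nn[of w] by (simp add: abs_mult)
          qed (use rho_h_int[OF ac] z spQ ir in auto)
          moreover have "0 \<le> (\<integral>w. norm (\<rho> w * h z w) \<partial>Q)" by simp
          ultimately show "norm (\<integral>w. norm (case (z, w) of (z, w) \<Rightarrow> \<rho> w * h z w) \<partial>Q) \<le> \<nu>\<^sup>2"
            using ir1 by simp
        qed
      qed measurable
      show "AE z in Q. integrable Q (\<lambda>w. case (z, w) of (z, w) \<Rightarrow> \<rho> w * h z w)"
        using rho_h_int[OF ac] spQ by (auto intro!: AE_I2)
    qed measurable
    have "(\<integral>z. \<phi>1 z \<partial>Q) = (\<integral>z. (\<integral>w. \<rho> w * h z w \<partial>Q) \<partial>Q)" by (simp add: \<phi>1_def)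
    also have "\<dots> = (\<integral>w. (\<integral>z. \<rho> w * h z w \<partial>Q) \<partial>Q)"
      using QQ.Fubini_integral[of "\<lambda>z w. \<rho> w * h z w"] int2 by simp
    also have "\<dots> = (\<integral>w. \<rho> w * \<phi>3 w \<partial>Q)"
    proof (rule Bochner_Integration.integral_cong[OF refl])
      fix w assume w: "w \<in> space Q"
      have "(\<integral>z. \<rho> w * h z w \<partial>Q) = (\<integral>z. \<rho> w * h w z \<partial>Q)"
        using h_sym w spQ by (intro Bochner_Integration.integral_cong refl) auto
      then show "(\<integral>z. \<rho> w * h z w \<partial>Q) = \<rho> w * \<phi>3 w" by (simp add: \<phi>3_def)
    qed
    finally show ?thesis .
  qed
  have Geq: "\<phi>1 z - \<phi>3 z = (\<integral>w. (\<rho> w - 1) * h z w \<partial>Q)" if z: "z \<in> space MX \<times> space MY" for z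
    unfolding \<phi>1_def \<phi>3_def using rho_h_int[OF ac z] h_int[OF z]
    by (simp add: left_diff_distrib)
  have Gb: "\<bar>\<phi>1 z - \<phi>3 z\<bar> \<le> \<nu>\<^sup>2 * L" if z: "z \<in> space MX \<times> space MY" for z
  proof -
    have "\<bar>\<phi>1 z - \<phi>3 z\<bar> \<le> (\<integral>w. \<bar>(\<rho> w - 1) * h z w\<bar> \<partial>Q)" unfolding Geq[OF z] by (rule integral_abs_bound)
    also have "\<dots> \<le> (\<integral>w. \<nu>\<^sup>2 * \<bar>\<rho> w - 1\<bar> \<partial>Q)"
    proof (rule integral_mono)
      show "integrable Q (\<lambda>w. \<bar>(\<rho> w - 1) * h z w\<bar>)"
        using rho_h_int[OF ac z] h_int[OF z] by (simp add: left_diff_distrib)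
    next
      fix w assume "w \<in> space Q"
      then have hb: "\<bar>h z w\<bar> \<le> \<nu>\<^sup>2" using h_bound z spQ by auto
      show "\<bar>(\<rho> w - 1) * h z w\<bar> \<le> \<nu>\<^sup>2 * \<bar>\<rho> w - 1\<bar>"
        using mult_right_mono[OF hb abs_ge_zero[of "\<rho> w - 1"]] by (simp add: abs_mult mult.commute)
    qed (use ir in auto)
    also have "\<dots> = \<nu>\<^sup>2 * L" by (simp add: L_def)
    finally show ?thesis .
  qed
  have "HSIC MX MY P k l = (\<integral>z. \<rho> z * \<phi>1 z \<partial>Q) - 2 * (\<integral>z. \<rho> z * \<phi>3 z \<partial>Q) + (\<integral>z. \<phi>3 z \<partial>Q)"
    using hsic_decomp T1 T2 T3 by simp
  also have "\<dots> = (\<integral>z. (\<rho> z - 1) * (\<phi>1 z - \<phi>3 z) \<partial>Q)"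
  proof -
    have "(\<integral>z. (\<rho> z - 1) * (\<phi>1 z - \<phi>3 z) \<partial>Q) = (\<integral>z. \<rho> z * \<phi>1 z - \<rho> z * \<phi>3 z - \<phi>1 z + \<phi>3 z \<partial>Q)"
      by (simp add: algebra_simps)
    also have "\<dots> = (\<integral>z. \<rho> z * \<phi>1 z \<partial>Q) - (\<integral>z. \<rho> z * \<phi>3 z \<partial>Q) - (\<integral>z. \<phi>1 z \<partial>Q) + (\<integral>z. \<phi>3 z \<partial>Q)"
      using ir1' ir3' i1 i3 by simp
    finally show ?thesis using swap by simp
  qed
  also have "\<dots> \<le> \<bar>\<integral>z. (\<rho> z - 1) * (\<phi>1 z - \<phi>3 z) \<partial>Q\<bar>" by simp
  also have "\<dots> \<le> (\<integral>z. \<bar>(\<rho> z - 1) * (\<phi>1 z - \<phi>3 z)\<bar> \<partial>Q)" by (rule integral_abs_bound)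
  also have "\<dots> \<le> (\<integral>z. \<bar>\<rho> z - 1\<bar> * (\<nu>\<^sup>2 * L) \<partial>Q)"
  proof (rule integral_mono)
    show "integrable Q (\<lambda>z. \<bar>(\<rho> z - 1) * (\<phi>1 z - \<phi>3 z)\<bar>)"
      using ir1' ir3' i1 i3 by (simp add: algebra_simps)
  next
    fix z assume "z \<in> space Q"
    then show "\<bar>(\<rho> z - 1) * (\<phi>1 z - \<phi>3 z)\<bar> \<le> \<bar>\<rho> z - 1\<bar> * (\<nu>\<^sup>2 * L)"
      using Gb spQ by (simp add: abs_mult mult_left_mono)
  qed (use ir in auto)
  also have "\<dots> = \<nu>\<^sup>2 * L^2" by (simp add: L_def power2_eq_square)
  finally show ?thesis by (simp add: L_def)
qed

end

theorem proposition3: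
  fixes MX :: "'a measure" and MY :: "'b measure" and P :: "('a \<times> 'b) measure"
    and k :: "'a \<Rightarrow> 'a \<Rightarrow> real" and l :: "'b \<Rightarrow> 'b \<Rightarrow> real" and \<nu> :: real
  assumes "prob_space P"
    and "sets P = sets (MX \<Otimes>\<^sub>M MY)"
    and "pd_kernel (space MX) k" and "pd_kernel (space MY) l"
    and "(\<lambda>(x, x'). k x x') \<in> borel_measurable (MX \<Otimes>\<^sub>M MX)"
    and "(\<lambda>(y, y'). l y y') \<in> borel_measurable (MY \<Otimes>\<^sub>M MY)"
    and "\<nu> > 0"
    and "\<forall>x\<in>space MX. \<forall>y\<in>space MY. k x x * l y y \<le> \<nu>\<^sup>2"
  shows "ereal (HSIC MX MY P k l / (2 * \<nu>\<^sup>2)) \<le> mutual_info MX MY P \<and>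
         (if HSIC MX MY P k l / (4 * \<nu>\<^sup>2) < 1
          then ereal (- ln (1 - HSIC MX MY P k l / (4 * \<nu>\<^sup>2)))
          else \<infinity>) \<le> mutual_info MX MY P"
proof -
  interpret hsic_setting MX MY P k l \<nu> unfolding hsic_setting_def using assms by auto
  have MI: "mutual_info MX MY P = KL_div P Q" by (simp add: mutual_info_def Q_def Px_def Py_def)
  show ?thesis
  proof (cases "absolutely_continuous Q P \<and> integrable P (\<lambda>z. ln (enn2real (RN_deriv Q P z)))")
    case False
    then have "mutual_info MX MY P = \<infinity>" unfolding MI KL_div_def by auto
    then show ?thesis by simp
  next
    case True
    then have ac: "absolutely_continuous Q P" and il: "integrable P (\<lambda>z. ln (\<rho> z))"
      by (auto simp: \<rho>_def)
    interpret Q: prob_space Q by (rule probQ)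
    define K where "K = (\<integral>z. \<rho> z * ln (\<rho> z) \<partial>Q)"
    define L where "L = (\<integral>z. \<bar>\<rho> z - 1\<bar> \<partial>Q)"
    have lnm: "(\<lambda>z. ln (\<rho> z)) \<in> borel_measurable (MX \<Otimes>\<^sub>M MY)" by measurable
    have "mutual_info MX MY P = ereal (\<integral>z. ln (\<rho> z) \<partial>P)"
      unfolding MI KL_div_def using True sPQ by (simp add: \<rho>_def)
    also have "(\<integral>z. ln (\<rho> z) \<partial>P) = K" unfolding K_def by (rule RN_int(1)[OF ac lnm])
    finally have MIK: "mutual_info MX MY P = ereal K" .
    have ilQ: "integrable Q (\<lambda>z. \<rho> z * ln (\<rho> z))" using RN_int(2)[OF ac lnm] il by simp
    have PB: "L^2 \<le> 2 * K" "exp (- K) \<le> 1 - L^2 / 4"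
      using Q.pinsker_BH[of \<rho>, OF rho_meas rho_nn rho_int(1)[OF ac] rho_int(2)[OF ac] ilQ]
      unfolding K_def L_def by auto
    define H where "H = HSIC MX MY P k l"
    have HL: "H \<le> \<nu>\<^sup>2 * L^2" unfolding H_def L_def by (rule hsic_le[OF ac])
    have nu2: "\<nu>\<^sup>2 > 0" using nu by simp
    have H1: "H / (2 * \<nu>\<^sup>2) \<le> K"
    proof -
      have "H / (2 * \<nu>\<^sup>2) \<le> (\<nu>\<^sup>2 * L^2) / (2 * \<nu>\<^sup>2)"
        using HL nu2 by (intro divide_right_mono) auto
      also have "\<dots> = L^2 / 2" using nu2 by simp
      finally show ?thesis using PB(1) by simp
    qed
    have H4: "H / (4 * \<nu>\<^sup>2) \<le> L^2 / 4"
    proof -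
      have "H / (4 * \<nu>\<^sup>2) \<le> (\<nu>\<^sup>2 * L^2) / (4 * \<nu>\<^sup>2)"
        using HL nu2 by (intro divide_right_mono) auto
      also have "\<dots> = L^2 / 4" using nu2 by simp
      finally show ?thesis .
    qed
    have e: "exp (- K) \<le> 1 - H / (4 * \<nu>\<^sup>2)" using H4 PB(2) by simp
    have lt: "H / (4 * \<nu>\<^sup>2) < 1" using e exp_gt_zero[of "-K"] by linarith
    have "- K \<le> ln (1 - H / (4 * \<nu>\<^sup>2))"
      using e by (metis exp_gt_zero ln_exp ln_le_cancel_iff order_less_le_trans)
    then have "- ln (1 - H / (4 * \<nu>\<^sup>2)) \<le> K" by simp
    then show ?thesis using H1 lt unfolding MIK H_def by simp
  qed
qed

end
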